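(* Let $f:[0,1]\to[0,1]$ be a continuous surjective function that does not admit a splitting sequence. If $f$ admits a 2-cycle $\{s,t\}$ with $s\in\{0,1\}$, then $(s,t,s,t,\dots)$ and $(t,s,t,s,\dots)$ are endpoints of $\varprojlim f$.
   Context: $\varprojlim f=\{\mathbf x=(x_0,x_1,\dots)\in[0,1]^{\mathbb N}: f(x_{n+1})=x_n\ \forall n\}$ with the product topology. A point $p$ of a continuum $X$ is an endpoint of $X$ if for any two subcontinua $A,B$ of $X$ containing $p$, $A\subseteq B$ or $B\subseteq A$. A 2-cycle is a set $\{s,t\}$ with $s\ne t$, $f(s)=t$, $f(t)=s$. A sequence $(T_n)_{n\in\mathbb N}$ of closed intervals $T_n\subsetneq[0,1]$ (possibly degenerate) is tight if $f(T_{n+1})=T_n$ for every $n$ and $T_n$ is nondegenerate for all sufficiently large $n$. A tight sequence $(T_n)$, $T_n=[l_n,r_n]$, is a splitting sequence admitted by $f$ if there are an infinite set $N\subseteq\mathbb N$ and nondegenerate closed intervals $S_n\subseteq[0,1]$ ($n\in N$) with $S_n\cap T_n\subseteq\{l_n,r_n\}$ and $f(S_n)=f(T_n)$ for all $n\in N$. *)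

theory Defs
  imports "HOL-Analysis.Analysis"
begin

text \<open>The inverse limit of f on [0,1], as a subset of nat => real; the type nat => real
  carries the product topology (HOL-Analysis Function_Topology).\<close>
definition inv_lim :: "(real \<Rightarrow> real) \<Rightarrow> (nat \<Rightarrow> real) set" where
  "inv_lim f = {x. (\<forall>n. x n \<in> {0..1}) \<and> (\<forall>n. f (x (Suc n)) = x n)}"

definition subcontinuum :: "'a::topological_space set \<Rightarrow> 'a set \<Rightarrow> bool" where
  "subcontinuum A X \<longleftrightarrow> A \<subseteq> X \<and> A \<noteq> {} \<and> compact A \<and> connected A"

definition endpoint :: "'a::topological_space set \<Rightarrow> 'a \<Rightarrow> bool" where
  "endpoint X p \<longleftrightarrow> p \<in> X \<and>
     (\<forall>A B. subcontinuum A X \<longrightarrow> subcontinuum B X \<longrightarrow> p \<in> A \<longrightarrow> p \<in> B \<longrightarrow> A \<subseteq> B \<or> B \<subseteq> A)"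

definition two_cycle :: "(real \<Rightarrow> real) \<Rightarrow> real \<Rightarrow> real \<Rightarrow> bool" where
  "two_cycle f s t \<longleftrightarrow> s \<noteq> t \<and> f s = t \<and> f t = s"

definition tight :: "(real \<Rightarrow> real) \<Rightarrow> (nat \<Rightarrow> real) \<Rightarrow> (nat \<Rightarrow> real) \<Rightarrow> bool" where
  "tight f l r \<longleftrightarrow>
     (\<forall>n. 0 \<le> l n \<and> l n \<le> r n \<and> r n \<le> 1 \<and> {l n..r n} \<noteq> {0..1}) \<and>
     (\<forall>n. f ` {l (Suc n)..r (Suc n)} = {l n..r n}) \<and>
     (\<exists>m. \<forall>n\<ge>m. l n < r n)"

definition splitting_seq :: "(real \<Rightarrow> real) \<Rightarrow> (nat \<Rightarrow> real) \<Rightarrow> (nat \<Rightarrow> real) \<Rightarrow> bool" where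
  "splitting_seq f l r \<longleftrightarrow> tight f l r \<and>
     (\<exists>N. infinite N \<and> (\<forall>n\<in>N. \<exists>a b. a < b \<and> {a..b} \<subseteq> {0..1} \<and>
        {a..b} \<inter> {l n..r n} \<subseteq> {l n, r n} \<and> f ` {a..b} = f ` {l n..r n}))"

definition admits_splitting :: "(real \<Rightarrow> real) \<Rightarrow> bool" where
  "admits_splitting f \<longleftrightarrow> (\<exists>l r. splitting_seq f l r)"

end

theory Submission
  imports Defs
begin

lemma tendsto_fun_comp:
  fixes b :: "nat \<Rightarrow> nat \<Rightarrow> real"
  assumes "\<And>i. ((\<lambda>n. b n i) \<longlongrightarrow> x i) sequentially"
  shows "(b \<longlongrightarrow> x) sequentially"
proof -
  have "limitin (product_topology (\<lambda>i. euclidean) UNIV) b x sequentially"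
    using assms by (simp add: limitin_componentwise)
  then show ?thesis by (simp add: euclidean_product_topology)
qed

lemma proj_step:
  assumes "A \<subseteq> inv_lim f"
  shows "(\<lambda>x. x n) ` A = f ` ((\<lambda>x. x (Suc n)) ` A)"
proof -
  have "\<And>x. x \<in> A \<Longrightarrow> f (x (Suc n)) = x n" using assms by (auto simp: inv_lim_def)
  then show ?thesis by (auto simp: image_iff)
qed

lemma proj_down:
  assumes "A \<subseteq> inv_lim f" "B \<subseteq> inv_lim f" "k \<le> m"
    and "(\<lambda>x. x m) ` A \<subseteq> (\<lambda>x. x m) ` B"
  shows "(\<lambda>x. x k) ` A \<subseteq> (\<lambda>x. x k) ` B"
  using assms(3)
proof (induction k rule: inc_induct)
  case base then show ?case using assms(4) .
next
  case (step n)
  show ?case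
    unfolding proj_step[OF assms(1), of n] proj_step[OF assms(2), of n]
    by (rule image_mono[OF step.IH])
qed

lemma agree_down:
  assumes "y \<in> inv_lim f" "x \<in> inv_lim f" "y n = x n" "k \<le> n"
  shows "y k = x k"
  using assms(4)
proof (induction k rule: inc_induct)
  case base then show ?case using assms(3) .
next
  case (step m)
  have e1: "f (y (Suc m)) = y m" using assms(1) by (simp add: inv_lim_def)
  have e2: "f (x (Suc m)) = x m" using assms(2) by (simp add: inv_lim_def)
  have "y m = f (y (Suc m))" using e1 by simp
  also have "\<dots> = f (x (Suc m))" using step.IH by simp
  also have "\<dots> = x m" using e2 by simp
  finally show ?case .
qed

lemma proj_subset:
  assumes "A \<subseteq> inv_lim f" "compact B" "B \<subseteq> inv_lim f"
    and "\<forall>n. (\<lambda>x. x n) ` A \<subseteq> (\<lambda>x. x n) ` B"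
  shows "A \<subseteq> B"
proof
  fix x assume xA: "x \<in> A"
  have xn: "x n \<in> (\<lambda>y. y n) ` B" for n
  proof -
    have "x n \<in> (\<lambda>y. y n) ` A" using xA by (rule imageI)
    then show ?thesis using assms(4) by (rule_tac subsetD) auto
  qed
  have "\<forall>n. \<exists>c. c \<in> B \<and> c n = x n"
  proof
    fix n
    from xn[of n] obtain c where "c \<in> B" "x n = c n" by (rule imageE)
    then show "\<exists>c. c \<in> B \<and> c n = x n" by auto
  qed
  then obtain b where bb: "\<forall>n. b n \<in> B \<and> b n n = x n" by (rule choice[THEN exE])
  then have b: "\<And>n. b n \<in> B" "\<And>n. b n n = x n" by auto
  have xI: "x \<in> inv_lim f" using xA assms(1) by blast
  have bI: "b n \<in> inv_lim f" for n using b(1) assms(3) by blast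
  have ag: "b n k = x k" if "k \<le> n" for n k
    using agree_down[OF bI xI b(2) that] .
  have "\<And>i. ((\<lambda>n. b n i) \<longlongrightarrow> x i) sequentially"
  proof -
    fix i
    have "eventually (\<lambda>n. b n i = x i) sequentially"
      using ag by (auto simp: eventually_sequentially intro!: exI[of _ i])
    then show "((\<lambda>n. b n i) \<longlongrightarrow> x i) sequentially"
      by (rule tendsto_eventually)
  qed
  then have "b \<longlonglongrightarrow> x" by (rule tendsto_fun_comp)
  moreover have "closed B" using assms(2) by (rule compact_imp_closed)
  moreover have "\<forall>n. b n \<in> B" using b(1) by blast
  ultimately show "x \<in> B" by (intro closed_sequentially[of B b x]) auto
qed

lemma nested_01:
  fixes S T :: "real set"
  assumes "connected S" "connected T" "S \<subseteq> {0..1}" "T \<subseteq> {0..1}"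
    "c \<in> S" "c \<in> T" "c \<in> {0,1}"
  shows "S \<subseteq> T \<or> T \<subseteq> S"
proof (rule ccontr)
  assume "\<not> (S \<subseteq> T \<or> T \<subseteq> S)"
  then obtain a b where ab: "a \<in> S" "a \<notin> T" "b \<in> T" "b \<notin> S" by blast
  have a01: "0 \<le> a" "a \<le> 1" using ab(1) assms(3) by auto
  have b01: "0 \<le> b" "b \<le> 1" using ab(3) assms(4) by auto
  have cc: "c = 0 \<or> c = 1" using assms(7) by simp
  show False
  proof (cases "a \<le> b")
    case True
    show False using cc
    proof
      assume "c = 0"
      then have "c \<le> a" using a01 by simp
      then have "a \<in> T" using connectedD_interval[OF assms(2) assms(6) ab(3) _ True] by blast
      then show False using ab(2) by blast
    next
      assume "c = 1"
      then have "b \<le> c" using b01 by simp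
      then have "b \<in> S" using connectedD_interval[OF assms(1) ab(1) assms(5) True] by blast
      then show False using ab(4) by blast
    qed
  next
    case False
    then have ba: "b \<le> a" by simp
    show False using cc
    proof
      assume "c = 0"
      then have "c \<le> b" using b01 by simp
      then have "b \<in> S" using connectedD_interval[OF assms(1) assms(5) ab(1) _ ba] by blast
      then show False using ab(4) by blast
    next
      assume "c = 1"
      then have "a \<le> c" using a01 by simp
      then have "a \<in> T" using connectedD_interval[OF assms(2) ab(3) assms(6) ba] by blast
      then show False using ab(2) by blast
    qed
  qed
qed

lemma proj_props:
  assumes "subcontinuum A (inv_lim f)"
  shows "connected ((\<lambda>x. x n) ` A) \<and> (\<lambda>x. x n) ` A \<subseteq> {0..1}"
proof
  show "connected ((\<lambda>x. x n) ` A)"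
    using assms unfolding subcontinuum_def
    using connected_continuous_image[OF continuous_on_subset[OF continuous_on_product_coordinates[of n] subset_UNIV]]
    by blast
  show "(\<lambda>x. x n) ` A \<subseteq> {0..1}" using assms by (auto simp: subcontinuum_def inv_lim_def)
qed

lemma endpoint_crit:
  assumes "p \<in> inv_lim f" "\<And>k. \<exists>m\<ge>k. p m \<in> {0,1}"
  shows "endpoint (inv_lim f) p"
  unfolding endpoint_def
proof (intro conjI allI impI)
  show "p \<in> inv_lim f" by fact
  fix A B assume A: "subcontinuum A (inv_lim f)" and B: "subcontinuum B (inv_lim f)"
    and pA: "p \<in> A" and pB: "p \<in> B"
  have As: "A \<subseteq> inv_lim f" "compact A" using A by (auto simp: subcontinuum_def)
  have Bs: "B \<subseteq> inv_lim f" "compact B" using B by (auto simp: subcontinuum_def)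
  show "A \<subseteq> B \<or> B \<subseteq> A"
  proof (rule ccontr)
    assume "\<not> (A \<subseteq> B \<or> B \<subseteq> A)"
    then have "\<not> (\<forall>n. (\<lambda>x. x n) ` A \<subseteq> (\<lambda>x. x n) ` B)" "\<not> (\<forall>n. (\<lambda>x. x n) ` B \<subseteq> (\<lambda>x. x n) ` A)"
      using proj_subset As Bs by blast+
    then obtain n1 n2 where n1: "\<not> (\<lambda>x. x n1) ` A \<subseteq> (\<lambda>x. x n1) ` B"
      and n2: "\<not> (\<lambda>x. x n2) ` B \<subseteq> (\<lambda>x. x n2) ` A" by blast
    obtain m where m: "m \<ge> n1 + n2" "p m \<in> {0,1}" using assms(2) by blast
    have "(\<lambda>x. x m) ` A \<subseteq> (\<lambda>x. x m) ` B \<or> (\<lambda>x. x m) ` B \<subseteq> (\<lambda>x. x m) ` A"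
    proof (rule nested_01)
      show "connected ((\<lambda>x. x m) ` A)" "(\<lambda>x. x m) ` A \<subseteq> {0..1}" using proj_props[OF A, of m] by auto
      show "connected ((\<lambda>x. x m) ` B)" "(\<lambda>x. x m) ` B \<subseteq> {0..1}" using proj_props[OF B, of m] by auto
      show "p m \<in> (\<lambda>x. x m) ` A" using pA by blast
      show "p m \<in> (\<lambda>x. x m) ` B" using pB by blast
      show "p m \<in> {0,1}" by fact
    qed
    moreover have "n1 \<le> m" "n2 \<le> m" using m(1) by auto
    ultimately show False
    proof (elim disjE)
      assume "(\<lambda>x. x m) ` A \<subseteq> (\<lambda>x. x m) ` B"
      from proj_down[OF As(1) Bs(1) \<open>n1 \<le> m\<close> this] n1 show False by simp
    next
      assume "(\<lambda>x. x m) ` B \<subseteq> (\<lambda>x. x m) ` A"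
      from proj_down[OF Bs(1) As(1) \<open>n2 \<le> m\<close> this] n2 show False by simp
    qed
  qed
qed

theorem lemma3p20:
  fixes f :: "real \<Rightarrow> real" and s t :: real
  assumes "continuous_on {0..1} f"
    and "f ` {0..1} = {0..1}"
    and "\<not> admits_splitting f"
    and "two_cycle f s t"
    and "s \<in> {0, 1}"
  shows "endpoint (inv_lim f) (\<lambda>n. if even n then s else t) \<and>
         endpoint (inv_lim f) (\<lambda>n. if even n then t else s)"
proof -
  have fs: "f s = t" "f t = s" using assms(4) by (auto simp: two_cycle_def)
  have s01: "s \<in> {0..1}" using assms(5) by auto
  then have t01: "t \<in> {0..1}" using assms(2) fs by blast
  have in1: "(\<lambda>n. if even n then s else t) \<in> inv_lim f"
    using s01 t01 fs by (auto simp: inv_lim_def)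
  have in2: "(\<lambda>n. if even n then t else s) \<in> inv_lim f"
    using s01 t01 fs by (auto simp: inv_lim_def)
  have e1: "\<exists>m\<ge>k. (\<lambda>n. if even n then s else t) m \<in> {0,1}" for k :: nat
    by (rule exI[of _ "2*k"]) (use assms(5) in auto)
  have e2: "\<exists>m\<ge>k. (\<lambda>n. if even n then t else s) m \<in> {0,1}" for k :: nat
    by (rule exI[of _ "2*k+1"]) (use assms(5) in auto)
  show ?thesis using endpoint_crit[OF in1 e1] endpoint_crit[OF in2 e2] by (rule conjI)
qed

end
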